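(* Let $u\in L_{\mathrm{up}}$ and $\ell\in F_u$. Then $P_{u,\ell}$ is nonempty and is the edge set of a path.
   Context: Let $(G=(V,E),L,w)$ be a WTAP instance (spanning tree $G$, links $L\subseteq\binom V2$, weights $w>0$) with a fixed root $r\in V$, and let $F\subseteq L$ be a WTAP solution, i.e. $\bigcup_{\ell\in F}P_\ell=E$, where $P_\ell$ is the edge set of the tree path between the endpoints of $\ell$ and $V_\ell$ its vertex set. Ancestors of $v$ are the vertices on the $r$-$v$ path in $G$ (including $r$ and $v$); descendants are defined reciprocally. $\mathrm{apex}(\ell)$ is the vertex of $V_\ell$ closest to $r$. An up-link is a link $\{t,b\}$ with $t$ an ancestor of $b$; $L_{\mathrm{up}}$ is the set of up-links. For $v\in V$ let $B_v=\{\ell\in F\colon \mathrm{apex}(\ell)\text{ is a descendant of }v\}$. For an up-link $u=\{t,b\}$ with $t$ an ancestor of $b$, let $v_u$ be the ancestor of $t$ farthest from $r$ such that $P_u\subseteq\bigcup_{\ell\in B_{v_u}}P_\ell$, and fix $F_u\subseteq B_{v_u}$ inclusion-wise minimal with $P_u\subseteq\bigcup_{\ell\in F_u}P_\ell$. For $\ell\in F_u$ let $P_{u,\ell}=P_u\setminus\bigcup_{\bar\ell\in F_u\setminus\{\ell\}}P_{\bar\ell}$. *)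

theory Defs
  imports Complex_Main
begin

text \<open>Graphs: vertices of type 'a, edges are 2-element vertex sets.\<close>

definition gpath :: "'a set set \<Rightarrow> 'a list \<Rightarrow> bool" where
  "gpath E xs \<longleftrightarrow> xs \<noteq> [] \<and> distinct xs \<and>
     (\<forall>i. Suc i < length xs \<longrightarrow> {xs ! i, xs ! Suc i} \<in> E)"

definition path_edges :: "'a list \<Rightarrow> 'a set set" where
  "path_edges xs = {{xs ! i, xs ! Suc i} | i. Suc i < length xs}"

definition is_tree :: "'a set \<Rightarrow> 'a set set \<Rightarrow> bool" where
  "is_tree V E \<longleftrightarrow> finite V \<and> E \<subseteq> {e. e \<subseteq> V \<and> card e = 2} \<and>
     (\<forall>a\<in>V. \<forall>b\<in>V. \<exists>!xs. gpath E xs \<and> hd xs = a \<and> last xs = b)"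

definition tpath :: "'a set set \<Rightarrow> 'a \<Rightarrow> 'a \<Rightarrow> 'a list" where
  "tpath E a b = (THE xs. gpath E xs \<and> hd xs = a \<and> last xs = b)"

definition tedges :: "'a set set \<Rightarrow> 'a \<Rightarrow> 'a \<Rightarrow> 'a set set" where
  "tedges E a b = path_edges (tpath E a b)"

definition lP :: "'a set set \<Rightarrow> 'a set \<Rightarrow> 'a set set" where
  "lP E l = \<Union>{tedges E a b | a b. l = {a, b}}"

definition lV :: "'a set set \<Rightarrow> 'a set \<Rightarrow> 'a set" where
  "lV E l = \<Union>{set (tpath E a b) | a b. l = {a, b}}"

definition anc :: "'a set set \<Rightarrow> 'a \<Rightarrow> 'a \<Rightarrow> 'a \<Rightarrow> bool" where
  "anc E r x v \<longleftrightarrow> x \<in> set (tpath E r v)"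

definition rdist :: "'a set set \<Rightarrow> 'a \<Rightarrow> 'a \<Rightarrow> nat" where
  "rdist E r v = length (tpath E r v)"

definition apex :: "'a set set \<Rightarrow> 'a \<Rightarrow> 'a set \<Rightarrow> 'a" where
  "apex E r l = (THE x. x \<in> lV E l \<and> (\<forall>y\<in>lV E l. rdist E r x \<le> rdist E r y))"

definition up_link :: "'a set set \<Rightarrow> 'a \<Rightarrow> 'a set \<Rightarrow> bool" where
  "up_link E r l \<longleftrightarrow> (\<exists>t b. l = {t, b} \<and> t \<noteq> b \<and> anc E r t b)"

definition L_up :: "'a set set \<Rightarrow> 'a \<Rightarrow> 'a set set \<Rightarrow> 'a set set" where
  "L_up E r L = {l \<in> L. up_link E r l}"

definition up_top :: "'a set set \<Rightarrow> 'a \<Rightarrow> 'a set \<Rightarrow> 'a" where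
  "up_top E r u = (THE t. \<exists>b. u = {t, b} \<and> t \<noteq> b \<and> anc E r t b)"

definition Bset :: "'a set set \<Rightarrow> 'a \<Rightarrow> 'a set set \<Rightarrow> 'a \<Rightarrow> 'a set set" where
  "Bset E r F v = {l \<in> F. anc E r v (apex E r l)}"

definition covers :: "'a set set \<Rightarrow> 'a set \<Rightarrow> 'a set set \<Rightarrow> bool" where
  "covers E u S \<longleftrightarrow> lP E u \<subseteq> \<Union>(lP E ` S)"

definition v_of :: "'a set set \<Rightarrow> 'a \<Rightarrow> 'a set set \<Rightarrow> 'a set \<Rightarrow> 'a" where
  "v_of E r F u = (THE x. anc E r x (up_top E r u) \<and> covers E u (Bset E r F x) \<and>
      (\<forall>y. anc E r y (up_top E r u) \<and> covers E u (Bset E r F y) \<longrightarrow> rdist E r y \<le> rdist E r x))"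

definition is_Fu :: "'a set set \<Rightarrow> 'a \<Rightarrow> 'a set set \<Rightarrow> 'a set \<Rightarrow> 'a set set \<Rightarrow> bool" where
  "is_Fu E r F u S \<longleftrightarrow> S \<subseteq> Bset E r F (v_of E r F u) \<and> covers E u S \<and>
      (\<forall>S'. S' \<subset> S \<longrightarrow> \<not> covers E u S')"

definition Pul :: "'a set set \<Rightarrow> 'a set \<Rightarrow> 'a set set \<Rightarrow> 'a set \<Rightarrow> 'a set set" where
  "Pul E u S l = lP E u - \<Union>(lP E ` (S - {l}))"

end

theory Submission
  imports Defs
begin

lemma slice:
  assumes "gpath E xs" "p \<le> q" "q < length xs"
  shows "gpath E (drop p (take (Suc q) xs))" "hd (drop p (take (Suc q) xs)) = xs!p"
    "last (drop p (take (Suc q) xs)) = xs!q"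
    "path_edges (drop p (take (Suc q) xs)) = {{xs!j, xs!Suc j}| j. p \<le> j \<and> j < q}"
proof -
  define zs where "zs = drop p (take (Suc q) xs)"
  have len: "length zs = Suc q - p" using assms by (simp add: zs_def)
  have nth: "\<And>i. i < length zs \<Longrightarrow> zs!i = xs!(p+i)" using assms len by (simp add: zs_def)
  have g: "xs \<noteq> [] \<and> distinct xs \<and> (\<forall>i. Suc i < length xs \<longrightarrow> {xs ! i, xs ! Suc i} \<in> E)"
    using assms(1) by (simp add: gpath_def)
  show "gpath E zs" unfolding gpath_def
  proof (intro conjI allI impI)
    show "zs \<noteq> []" using len assms by auto
    show "distinct zs" using g by (simp add: zs_def)
    fix i assume "Suc i < length zs"
    then show "{zs ! i, zs ! Suc i} \<in> E" using nth[of i] nth[of "Suc i"] g len assms by auto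
  qed
  show "hd zs = xs!p" using nth[of 0] len assms by (subst hd_conv_nth) auto
  show "last zs = xs!q" using nth[of "length zs - 1"] len assms
    by (subst last_conv_nth) auto
  show "path_edges zs = {{xs!j, xs!Suc j}| j. p \<le> j \<and> j < q}"
    unfolding path_edges_def
  proof (intro set_eqI iffI)
    fix x assume "x \<in> {{zs ! i, zs ! Suc i} |i. Suc i < length zs}"
    then obtain i where "Suc i < length zs" "x = {zs ! i, zs ! Suc i}" by auto
    then show "x \<in> {{xs!j, xs!Suc j}| j. p \<le> j \<and> j < q}"
      using nth[of i] nth[of "Suc i"] len by (intro CollectI exI[of _ "p+i"]) auto
  next
    fix x assume "x \<in> {{xs!j, xs!Suc j}| j. p \<le> j \<and> j < q}"
    then obtain j where j: "p \<le> j" "j < q" "x = {xs!j, xs!Suc j}" by auto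
    then show "x \<in> {{zs ! i, zs ! Suc i} |i. Suc i < length zs}"
      using nth[of "j-p"] nth[of "Suc (j-p)"] len by (intro CollectI exI[of _ "j-p"]) auto
  qed
qed

lemma gpath_rev:
  assumes "gpath E xs"
  shows "gpath E (rev xs)" "path_edges (rev xs) = path_edges xs"
proof -
  have g: "xs \<noteq> [] \<and> distinct xs \<and> (\<forall>i. Suc i < length xs \<longrightarrow> {xs ! i, xs ! Suc i} \<in> E)"
    using assms(1) by (simp add: gpath_def)
  have key: "\<And>i. Suc i < length xs \<Longrightarrow> {rev xs ! i, rev xs ! Suc i} = {xs ! (length xs - Suc (Suc i)), xs ! Suc (length xs - Suc (Suc i))}"
    by (simp add: rev_nth Suc_diff_Suc insert_commute)
  show "gpath E (rev xs)" unfolding gpath_def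
    using g key by (auto simp del: rev_nth)
  show "path_edges (rev xs) = path_edges xs"
    unfolding path_edges_def
  proof (intro set_eqI iffI)
    fix x assume "x \<in> {{rev xs ! i, rev xs ! Suc i} |i. Suc i < length (rev xs)}"
    then obtain i where "Suc i < length xs" "x = {rev xs ! i, rev xs ! Suc i}" by auto
    then show "x \<in> {{xs ! i, xs ! Suc i} |i. Suc i < length xs}"
      using key[of i] by (intro CollectI exI[of _ "length xs - Suc (Suc i)"]) auto
  next
    fix x assume "x \<in> {{xs ! i, xs ! Suc i} |i. Suc i < length xs}"
    then obtain i where i: "Suc i < length xs" "x = {xs ! i, xs ! Suc i}" by auto
    define k where "k = length xs - Suc (Suc i)"
    have "Suc k < length xs" "length xs - Suc (Suc k) = i" using i by (auto simp: k_def)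
    then show "x \<in> {{rev xs ! i, rev xs ! Suc i} |i. Suc i < length (rev xs)}"
      using key[of k] i by (intro CollectI exI[of _ k]) auto
  qed
qed

lemma tree_unique:
  assumes "is_tree V E" "a \<in> V" "b \<in> V" "gpath E xs" "hd xs = a" "last xs = b"
    "gpath E ys" "hd ys = a" "last ys = b"
  shows "xs = ys"
  using assms unfolding is_tree_def by metis

lemma tpath_props:
  assumes "is_tree V E" "a \<in> V" "b \<in> V"
  shows "gpath E (tpath E a b) \<and> hd (tpath E a b) = a \<and> last (tpath E a b) = b"
proof -
  have "\<exists>!xs. gpath E xs \<and> hd xs = a \<and> last xs = b" using assms unfolding is_tree_def by blast
  then show ?thesis unfolding tpath_def by (rule theI')
qed

lemma tedges_sym:
  assumes "is_tree V E" "a \<in> V" "b \<in> V"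
  shows "tedges E b a = tedges E a b"
proof -
  have 1: "gpath E (tpath E a b) \<and> hd (tpath E a b) = a \<and> last (tpath E a b) = b"
    using tpath_props assms by metis
  have 2: "gpath E (tpath E b a) \<and> hd (tpath E b a) = b \<and> last (tpath E b a) = a"
    using tpath_props assms by metis
  have "tpath E b a = rev (tpath E a b)"
    using tree_unique[OF assms(1) assms(3) assms(2)] 1 2 gpath_rev(1)[of E "tpath E a b"]
    by (metis gpath_def hd_rev last_rev)
  then show ?thesis unfolding tedges_def using gpath_rev(2) 1 by metis
qed

lemma lP_eq:
  assumes "is_tree V E" "a \<in> V" "b \<in> V" "l = {a,b}"
  shows "lP E l = tedges E a b"
proof -
  have "{tedges E a' b' | a' b'. l = {a', b'}} = {tedges E a b}"
    using assms tedges_sym[OF assms(1-3)] by (auto simp: doubleton_eq_iff)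
  then show ?thesis unfolding lP_def by simp
qed

lemma tree_interval:
  assumes T: "is_tree V E" and X: "gpath E xs" and Y: "gpath E ys"
   and ik: "i < j" "j < k" "Suc k < length xs"
   and ei: "{xs!i, xs!Suc i} \<in> path_edges ys" and ek: "{xs!k, xs!Suc k} \<in> path_edges ys"
  shows "{xs!j, xs!Suc j} \<in> path_edges ys"
proof -
  have EV: "\<And>e. e \<in> E \<Longrightarrow> e \<subseteq> V" using T by (auto simp: is_tree_def)
  have gx: "\<forall>i. Suc i < length xs \<longrightarrow> {xs ! i, xs ! Suc i} \<in> E" using X by (simp add: gpath_def)
  have Va: "xs!Suc i \<in> V" using EV gx ik by (meson Suc_lessD insert_subset less_trans_Suc)
  have Vb: "xs!k \<in> V" using EV gx ik by (meson insert_subset)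
  have "xs!Suc i \<in> set ys" using ei unfolding path_edges_def
    by (auto simp: doubleton_eq_iff)
  then obtain s where s: "s < length ys" "ys!s = xs!Suc i" by (metis in_set_conv_nth)
  have "xs!k \<in> set ys" using ek unfolding path_edges_def
    by (auto simp: doubleton_eq_iff)
  then obtain t where t: "t < length ys" "ys!t = xs!k" by (metis in_set_conv_nth)
  define A where "A = drop (Suc i) (take (Suc k) xs)"
  have A: "gpath E A" "hd A = xs!Suc i" "last A = xs!k"
     "path_edges A = {{xs!j, xs!Suc j}| j. Suc i \<le> j \<and> j < k}"
    using slice[OF X, of "Suc i" k] ik unfolding A_def by auto
  have jA: "{xs!j, xs!Suc j} \<in> path_edges A" using A(4) ik by auto
  show ?thesis
  proof (cases "s \<le> t")
    case True
    define B where "B = drop s (take (Suc t) ys)"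
    have B: "gpath E B" "hd B = xs!Suc i" "last B = xs!k"
     "path_edges B = {{ys!j, ys!Suc j}| j. s \<le> j \<and> j < t}"
      using slice[OF Y, of s t] True s t unfolding B_def by auto
    have "A = B" using tree_unique[OF T Va Vb] A B by metis
    moreover have "path_edges B \<subseteq> path_edges ys" using B(4) t
      unfolding path_edges_def by auto
    ultimately show ?thesis using jA by auto
  next
    case False
    define B where "B = drop t (take (Suc s) ys)"
    have B: "gpath E B" "hd B = xs!k" "last B = xs!Suc i"
     "path_edges B = {{ys!j, ys!Suc j}| j. t \<le> j \<and> j < s}"
      using slice[OF Y, of t s] False s t unfolding B_def by auto
    have "A = rev B" using tree_unique[OF T Va Vb] A B gpath_rev[OF B(1)]
      by (metis gpath_def hd_rev last_rev)
    moreover have "path_edges B \<subseteq> path_edges ys" using B(4) s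
      unfolding path_edges_def by auto
    ultimately show ?thesis using jA gpath_rev(2)[OF B(1)] by auto
  qed
qed

theorem lemma7:
  fixes V :: "'a set" and E :: "'a set set" and L F :: "'a set set"
    and w :: "'a set \<Rightarrow> real" and r :: 'a and u l :: "'a set" and Fu :: "'a set set"
  assumes tree: "is_tree V E"
    and root: "r \<in> V"
    and links: "L \<subseteq> {l. l \<subseteq> V \<and> card l = 2}"
    and weights: "\<forall>l\<in>L. w l > 0"
    and FL: "F \<subseteq> L"
    and Fsol: "\<Union>(lP E ` F) = E"
    and u: "u \<in> L_up E r L"
    and Fu: "is_Fu E r F u Fu"
    and l: "l \<in> Fu"
  shows "Pul E u Fu l \<noteq> {} \<and> (\<exists>xs. gpath E xs \<and> path_edges xs = Pul E u Fu l)"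
proof -
  have linkP: "\<exists>ys. gpath E ys \<and> lP E m = path_edges ys" if "m \<in> L" for m
  proof -
    have "m \<subseteq> V" "card m = 2" using that links by auto
    then obtain c d where cd: "m = {c,d}" "c \<in> V" "d \<in> V" by (auto simp: card_2_iff)
    then show ?thesis using lP_eq[OF tree cd(2,3,1)] tpath_props[OF tree cd(2,3)]
      unfolding tedges_def by blast
  qed
  have FuL: "Fu \<subseteq> L" using Fu FL unfolding is_Fu_def Bset_def by auto
  have uL: "u \<in> L" using u by (simp add: L_up_def)
  obtain xs where X: "gpath E xs" and Pu: "lP E u = path_edges xs" using linkP[OF uL] by blast
  define N where "N = length xs"
  define e where "e = (\<lambda>i. {xs!i, xs!Suc i})"
  have Pu': "lP E u = e ` {i. Suc i < N}" unfolding Pu path_edges_def e_def N_def by auto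
  have interval: "e j \<in> lP E m" if H: "m \<in> Fu" "i < j" "j < k" "Suc k < N" "e i \<in> lP E m" "e k \<in> lP E m" for m i j k
  proof -
    obtain ys where Y: "gpath E ys" "lP E m = path_edges ys" using linkP FuL H(1) by blast
    show ?thesis using tree_interval[OF tree X Y(1) H(2,3)] H Y(2) unfolding e_def N_def by auto
  qed
  have cov: "lP E u \<subseteq> \<Union>(lP E ` Fu)" using Fu unfolding is_Fu_def covers_def by auto
  have priv: "\<exists>i. Suc i < N \<and> e i \<in> lP E m \<and> (\<forall>m'\<in>Fu-{m}. e i \<notin> lP E m')" if "m \<in> Fu" for m
  proof -
    have "Fu - {m} \<subset> Fu" using that by auto
    then have "\<not> covers E u (Fu - {m})" using Fu unfolding is_Fu_def by auto
    then obtain x where x: "x \<in> lP E u" "x \<notin> \<Union>(lP E ` (Fu - {m}))" unfolding covers_def by auto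
    then obtain i where i: "Suc i < N" "x = e i" using Pu' by auto
    have "x \<in> lP E m" using x cov by auto
    then show ?thesis using i x by auto
  qed
  define J where "J = {i. Suc i < N \<and> (\<forall>m\<in>Fu-{l}. e i \<notin> lP E m)}"
  have Jl: "e i \<in> lP E l" if "i \<in> J" for i
  proof -
    have "e i \<in> lP E u" using that Pu' unfolding J_def by auto
    then obtain m where "m \<in> Fu" "e i \<in> lP E m" using cov by auto
    then show ?thesis using that unfolding J_def by (cases "m = l") auto
  qed
  have Jint: "j \<in> J" if ij: "i \<in> J" "k \<in> J" "i < j" "j < k" for i j k
  proof (rule ccontr)
    assume nj: "j \<notin> J"
    have kN: "Suc k < N" using ij unfolding J_def by auto
    have jN: "Suc j < N" using ij kN by linarith
    then obtain m where m: "m \<in> Fu" "m \<noteq> l" "e j \<in> lP E m" using nj unfolding J_def by blast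
    obtain p where p: "Suc p < N" "e p \<in> lP E m" "\<forall>m'\<in>Fu-{m}. e p \<notin> lP E m'" using priv[OF m(1)] by blast
    have pl: "e p \<notin> lP E l" using p(3) l m(2) by blast
    have ni: "e i \<notin> lP E m" using ij(1) m unfolding J_def by blast
    have nk: "e k \<notin> lP E m" using ij(2) m unfolding J_def by blast
    consider "p < i" | "p = i" | "i < p \<and> p < k" | "p = k" | "k < p" by linarith
    then show False
    proof cases
      case 1 then show ?thesis using interval[OF m(1) 1 ij(3) jN p(2) m(3)] ni by blast
    next
      case 2 then show ?thesis using ni p(2) by simp
    next
      case 3 then show ?thesis using interval[OF l conjunct1[OF 3] conjunct2[OF 3] kN Jl[OF ij(1)] Jl[OF ij(2)]] pl by blast
    next
      case 4 then show ?thesis using nk p(2) by simp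
    next
      case 5 then show ?thesis using interval[OF m(1) ij(4) 5 p(1) m(3) p(2)] nk by blast
    qed
  qed
  have Pul: "Pul E u Fu l = e ` J"
    unfolding Pul_def Pu' J_def by blast
  obtain i0 where "i0 \<in> J" using priv[OF l] unfolding J_def by auto
  then have Jne: "J \<noteq> {}" by auto
  have Jfin: "finite J" unfolding J_def by (rule finite_subset[of _ "{..<N}"]) auto
  define p where "p = Min J"
  define q where "q = Max J"
  have pJ: "p \<in> J" and qJ: "q \<in> J" using Jne Jfin unfolding p_def q_def by auto
  have Jeq: "J = {p..q}"
  proof
    show "J \<subseteq> {p..q}" using Jfin unfolding p_def q_def by auto
    show "{p..q} \<subseteq> J"
    proof
      fix j assume "j \<in> {p..q}"
      then consider "j = p" | "j = q" | "p < j \<and> j < q" by (cases "j = p"; cases "j = q") auto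
      then show "j \<in> J"
      proof cases
        case 3 then show ?thesis using Jint[OF pJ qJ] by blast
      qed (use pJ qJ in simp_all)
    qed
  qed
  have pq: "p \<le> q" using Jeq pJ by auto
  have qN: "Suc q < N" using qJ unfolding J_def by auto
  define ys where "ys = drop p (take (Suc (Suc q)) xs)"
  have Y: "gpath E ys" "path_edges ys = {{xs!j, xs!Suc j}| j. p \<le> j \<and> j < Suc q}"
    using slice[OF X, of p "Suc q"] pq qN unfolding ys_def N_def by auto
  have "path_edges ys = e ` J" unfolding Y(2) Jeq e_def by auto
  then show ?thesis using Jne Pul Y(1) by auto
qed

end
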